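(* Let $n,d,r,k$ be positive integers with $n\geq\mathrm{R}\big(2d,\,r+2d-1,\,2^{k2^{2d^2+d}}\big)$. Then for every collection $\boldsymbol\lambda=\langle\lambda_F: F\in\binom{\binom{[n]}{\leq 2}}{\leq d}\rangle$ of elements of $\mathbb{Z}_{2^k}$ there exists $X\subseteq[n]$ with $|X|=r$ such that $\boldsymbol\lambda$ is canonical in $X$.
   Context: For a set $S$ and integer $j\geq 1$, $\binom{S}{\leq j}$ denotes the set of nonempty subsets of $S$ with at most $j$ elements, and $\binom{S}{j}$ those with exactly $j$ elements. $\mathbb{Z}_{2^k}=\mathbb{Z}/2^k\mathbb{Z}$. Ramsey numbers: for positive integers $\ell\leq m$ and $c$, $\mathrm{R}(\ell,m,c)$ is the least positive integer $N$ such that for every $n\geq N$ and every colouring $\chi\colon\binom{[n]}{\ell}\to[c]$ there is $X\in\binom{[n]}{m}$ with $\chi$ constant on $\binom{X}{\ell}$. Type: for a nonempty set $F$ of nonempty subsets of $[n]$, write $\bigcup F=\{u_1<\dots<u_\ell\}$ and set $\tau(F)=\{S\subseteq[\ell]: \{u_i: i\in S\}\in F\}$. Canonical: a collection $\boldsymbol\lambda=\langle\lambda_F: F\in\binom{\binom{[n]}{\leq 2}}{\leq d}\rangle$ is canonical in a nonempty $X\subseteq[n]$ if $\lambda_{F_1}=\lambda_{F_2}$ whenever $F_1,F_2\in\binom{\binom{X}{\leq 2}}{\leq d}$ satisfy $\tau(F_1)=\tau(F_2)$. *)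

theory Defs
  imports Main
begin

definition binom_le :: "'a set \<Rightarrow> nat \<Rightarrow> 'a set set" where
  "binom_le S j = {A. A \<subseteq> S \<and> A \<noteq> {} \<and> finite A \<and> card A \<le> j}"

definition binom_eq :: "'a set \<Rightarrow> nat \<Rightarrow> 'a set set" where
  "binom_eq S j = {A. A \<subseteq> S \<and> finite A \<and> card A = j}"

definition ramsey_prop :: "nat \<Rightarrow> nat \<Rightarrow> nat \<Rightarrow> nat \<Rightarrow> bool" where
  "ramsey_prop l m c N \<longleftrightarrow>
     (\<forall>n\<ge>N. \<forall>\<chi> :: nat set \<Rightarrow> nat.
        (\<forall>e \<in> binom_eq {1..n} l. \<chi> e \<in> {1..c}) \<longrightarrow>
        (\<exists>X \<in> binom_eq {1..n} m. \<exists>col. \<forall>e \<in> binom_eq X l. \<chi> e = col))"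

definition ramsey_num :: "nat \<Rightarrow> nat \<Rightarrow> nat \<Rightarrow> nat" where
  "ramsey_num l m c = (LEAST N. N > 0 \<and> ramsey_prop l m c N)"

text \<open>The type of a family F of subsets of nat: with \<Union>F = {u_1 < ... < u_l},
  tau F = {S \<subseteq> [l]. {u_i | i \<in> S} \<in> F}.\<close>
definition tau :: "nat set set \<Rightarrow> nat set set" where
  "tau F = {S. S \<subseteq> {1..card (\<Union>F)} \<and>
               (\<lambda>i. sorted_list_of_set (\<Union>F) ! (i - 1)) ` S \<in> F}"

definition canonical :: "nat \<Rightarrow> (nat set set \<Rightarrow> 'b) \<Rightarrow> nat set \<Rightarrow> bool" where
  "canonical d lam X \<longleftrightarrow> X \<noteq> {} \<and>
     (\<forall>F1 \<in> binom_le (binom_le X 2) d. \<forall>F2 \<in> binom_le (binom_le X 2) d.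
        tau F1 = tau F2 \<longrightarrow> lam F1 = lam F2)"

end

theory Submission imports Defs "HOL-Library.Ramsey" "HOL-Library.FuncSet" begin

lemma ramsey_exists:
  assumes "c > 0"
  shows "\<exists>N. N > 0 \<and> ramsey_prop l m c N"
proof -
  obtain N0 :: nat where N0: "partn_lst {..<N0} (replicate c m) l"
    using ramsey_full by blast
  have "ramsey_prop l m c (Suc N0)"
    unfolding ramsey_prop_def
  proof (intro allI impI)
    fix n \<chi> assume n: "Suc N0 \<le> n" and col: "\<forall>e\<in>binom_eq {1..n} l. \<chi> e \<in> {1..c}"
    define f where "f A = \<chi> (Suc ` A) - 1" for A
    have SucA: "Suc ` A \<in> binom_eq {1..n} j" if "A \<in> nsets {..<N0} j" for A j
    proof -
      have A: "A \<subseteq> {..<N0}" "finite A" "card A = j" using that by (auto simp: nsets_def)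
      have "inj_on Suc A" by simp
      then have "card (Suc ` A) = j" using A by (simp add: card_image)
      moreover have "Suc ` A \<subseteq> {1..n}" using A n by auto
      ultimately show ?thesis using A by (simp add: binom_eq_def)
    qed
    have fP: "f \<in> nsets {..<N0} l \<rightarrow> {..<length (replicate c m)}"
    proof
      fix A assume A: "A \<in> nsets {..<N0} l"
      then have "\<chi> (Suc ` A) \<in> {1..c}" using col SucA by blast
      then show "f A \<in> {..<length (replicate c m)}"
        unfolding f_def by auto
    qed
    obtain i H where i: "i < length (replicate c m)" and H: "H \<in> nsets {..<N0} (replicate c m ! i)"
       and Hm: "f ` (nsets H l) \<subseteq> {i}"
      using partn_lstE[OF N0 fP refl] by blast
    have Hm': "H \<in> nsets {..<N0} m" using H i by simp
    have X: "Suc ` H \<in> binom_eq {1..n} m" using SucA[OF Hm'] .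
    have "\<forall>e\<in>binom_eq (Suc ` H) l. \<chi> e = Suc i"
    proof
      fix e assume e: "e \<in> binom_eq (Suc ` H) l"
      define A where "A = (\<lambda>x. x - 1) ` e"
      have pos: "\<forall>x\<in>e. x \<ge> 1" using e by (auto simp: binom_eq_def)
      have "Suc ` A = (\<lambda>x. Suc (x - 1)) ` e" unfolding A_def by (simp add: image_image)
      also have "\<dots> = e" using pos by force
      finally have eA: "e = Suc ` A" by simp
      have "A \<subseteq> H" using e eA by (auto simp: binom_eq_def)
      moreover have "finite A" using e A_def by (auto simp: binom_eq_def)
      moreover have "card A = l" using e eA \<open>finite A\<close> by (simp add: binom_eq_def card_image)
      ultimately have "A \<in> nsets H l" by (auto simp: nsets_def)
      then have "f A = i" using Hm by blast
      moreover have "e \<in> binom_eq {1..n} l" using e X by (auto simp: binom_eq_def)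
      then have "\<chi> e \<in> {1..c}" using col by blast
      ultimately show "\<chi> e = Suc i" using f_def eA by auto
    qed
    then show "\<exists>X\<in>binom_eq {1..n} m. \<exists>col. \<forall>e\<in>binom_eq X l. \<chi> e = col"
      using X by blast
  qed
  then show ?thesis by blast
qed
lemma sorted_list_Un:
  fixes U E :: "nat set"
  assumes "finite U" "finite E" "\<forall>u\<in>U. \<forall>e\<in>E. u < e"
  shows "sorted_list_of_set (U \<union> E) = sorted_list_of_set U @ sorted_list_of_set E"
proof -
  let ?xs = "sorted_list_of_set U @ sorted_list_of_set E"
  have "sorted ?xs" using assms by (auto simp: sorted_append less_imp_le)
  moreover have "distinct ?xs" using assms by auto
  ultimately have "sorted_list_of_set (set ?xs) = ?xs"
    by (rule sorted_list_of_set.idem_if_sorted_distinct)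
  moreover have "set ?xs = U \<union> E" using assms by auto
  ultimately show ?thesis by simp
qed

lemma card_B: "card (binom_le {1..2*d::nat} 2) = 2*d^2 + d"
proof -
  have eq: "binom_le {1..2*d::nat} 2 = binom_eq {1..2*d} 1 \<union> binom_eq {1..2*d} 2"
    apply (auto simp: binom_le_def binom_eq_def)
    apply (subgoal_tac "card x > 0")
     apply linarith
    apply (auto simp: card_gt_0_iff)
    done
  have f: "finite (binom_eq {1..2*d::nat} j)" for j
    by (rule finite_subset[of _ "Pow {1..2*d}"]) (auto simp: binom_eq_def)
  have c: "card (binom_eq {1..2*d::nat} j) = (2*d) choose j" for j
  proof -
    have "binom_eq {1..2*d::nat} j = {B. B \<subseteq> {1..2*d} \<and> card B = j}"
      by (auto simp: binom_eq_def intro: finite_subset)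
    then show ?thesis by (simp add: n_subsets)
  qed
  have "card (binom_le {1..2*d::nat} 2) = 2*d + (2*d choose 2)"
  proof -
    have "card (binom_eq {1..2*d::nat} 1 \<union> binom_eq {1..2*d} 2)
       = card (binom_eq {1..2*d::nat} 1) + card (binom_eq {1..2*d} 2)"
      by (rule card_Un_disjoint) (auto simp: f binom_eq_def)
    then show ?thesis unfolding eq c by simp
  qed
  also have "(2*d choose 2) = d * (2*d - 1)"
    by (simp add: choose_two)
  also have "2*d + d*(2*d-1) = 2*d^2 + d"
    by (cases d) (auto simp: power2_eq_square algebra_simps)
  finally show ?thesis .
qed
theorem corollary5p9:
  fixes n d r k :: nat and lam :: "nat set set \<Rightarrow> nat"
  assumes "n > 0" "d > 0" "r > 0" "k > 0"
    and "n \<ge> ramsey_num (2 * d) (r + 2 * d - 1) (2 ^ (k * 2 ^ (2 * d\<^sup>2 + d)))"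
    and "\<forall>F \<in> binom_le (binom_le {1..n} 2) d. lam F < 2 ^ k"
  shows "\<exists>X \<subseteq> {1..n}. card X = r \<and> canonical d lam X"
proof -
  define m where "m = r + 2*d - 1"
  define c where "c = (2::nat) ^ (k * 2 ^ (2 * d\<^sup>2 + d))"
  define B where "B = binom_le {1..2*d::nat} 2"
  define A where "A = Pow B"
  define K where "K = {0..<(2::nat)^k}"
  define P where "P = PiE A (\<lambda>_. K)"
  have finB: "finite B"
    by (rule finite_subset[of _ "Pow {1..2*d}"]) (auto simp: B_def binom_le_def)
  have finA: "finite A" using finB A_def by simp
  have cardP: "card P = c"
  proof -
    have "card P = card K ^ card A" unfolding P_def using finA by (simp add: card_PiE)
    also have "\<dots> = (2^k) ^ (2 ^ (2*d^2+d))"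
    proof -
      have "card A = 2 ^ card B" unfolding A_def using finB by (simp add: card_Pow)
      then have "card A = 2 ^ (2*d^2+d)" unfolding B_def by (simp only: card_B)
      then show ?thesis by (simp add: K_def)
    qed
    finally show ?thesis by (simp add: c_def power_mult)
  qed
  have finP: "finite P" unfolding P_def using finA by (simp add: finite_PiE K_def)
  obtain h where h: "bij_betw h P {1..c}"
    using bij_betw_iff_card[OF finP, of "{1..c}"] cardP by auto
  define phi where "phi Y i = sorted_list_of_set Y ! (i - 1)" for Y :: "nat set" and i :: nat
  define emb where "emb Y G = (\<lambda>S. phi Y ` S) ` G" for Y G
  define g where "g Y = (\<lambda>G\<in>A. if lam (emb Y G) < 2^k then lam (emb Y G) else 0)" for Y
  have gP: "g Y \<in> P" for Y
    unfolding g_def P_def K_def by auto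
  define \<chi> where "\<chi> Y = h (g Y)" for Y
  have col: "\<forall>e\<in>binom_eq {1..n} (2*d). \<chi> e \<in> {1..c}"
    using h gP bij_betw_apply \<chi>_def by fastforce
  have "c > 0" unfolding c_def by simp
  have RP: "ramsey_prop (2*d) m c (ramsey_num (2*d) m c)"
    using LeastI_ex[OF ramsey_exists[OF \<open>c > 0\<close>]] unfolding ramsey_num_def by blast
  moreover have "ramsey_num (2*d) m c \<le> n" using assms(5) by (simp add: m_def c_def)
  ultimately have "\<exists>X\<in>binom_eq {1..n} m. \<exists>col. \<forall>e\<in>binom_eq X (2*d). \<chi> e = col"
    unfolding ramsey_prop_def using col by blast
  then obtain Z cl where Z: "Z \<in> binom_eq {1..n} m" and Zc: "\<forall>e\<in>binom_eq Z (2*d). \<chi> e = cl"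
    by blast
  have gsame: "g Y1 = g Y2" if "Y1 \<in> binom_eq Z (2*d)" "Y2 \<in> binom_eq Z (2*d)" for Y1 Y2
  proof -
    have "h (g Y1) = h (g Y2)" using Zc that unfolding \<chi>_def by simp
    then show ?thesis using h gP unfolding bij_betw_def inj_on_def by blast
  qed
  define zs where "zs = sorted_list_of_set Z"
  have finZ: "finite Z" using Z by (auto simp: binom_eq_def)
  have zs: "length zs = m" "distinct zs" "set zs = Z" "sorted_wrt (<) zs"
    using Z finZ by (auto simp: zs_def binom_eq_def strict_sorted_list_of_set)
  define X where "X = set (take r zs)"
  define W where "W = set (drop r zs)"
  have XW: "\<forall>x\<in>X. \<forall>w\<in>W. x < w"
  proof -
    have "sorted_wrt (<) (take r zs @ drop r zs)" using zs by simp
    then show ?thesis unfolding X_def W_def sorted_wrt_append by blast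
  qed
  have "r \<le> m" using m_def assms by simp
  have cardX: "card X = r" unfolding X_def using zs \<open>r \<le> m\<close>
    by (simp add: distinct_card)
  have XZ: "X \<subseteq> Z" unfolding X_def using zs set_take_subset by metis
  have Xn: "X \<subseteq> {1..n}" using XZ Z by (auto simp: binom_eq_def)
  have finX: "finite X" unfolding X_def by simp
  have key: "\<exists>Y \<in> binom_eq Z (2*d). lam F = g Y (tau F)"
    if F: "F \<in> binom_le (binom_le X 2) d" for F
  proof -
    define U where "U = \<Union>F"
    define l where "l = card U"
    have FX: "\<forall>E\<in>F. E \<subseteq> X \<and> E \<noteq> {} \<and> finite E \<and> card E \<le> 2"
      and Fne: "F \<noteq> {}" "finite F" "card F \<le> d"
      using F by (auto simp: binom_le_def)
    have UX: "U \<subseteq> X" using FX U_def by auto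
    have finU: "finite U" using finite_subset[OF UX finX] .
    have "U \<noteq> {}" using FX Fne U_def by auto
    then have l1: "l \<ge> 1" using finU l_def by (simp add: Suc_leI card_gt_0_iff)
    have "l \<le> sum card F" unfolding l_def U_def by (rule card_Union_le_sum_card)
    also have "\<dots> \<le> sum (\<lambda>_. 2) F" using FX by (intro sum_mono) auto
    also have "\<dots> \<le> 2 * d" using Fne by simp
    finally have l2: "l \<le> 2*d" .
    define E where "E = set (take (2*d - l) (drop r zs))"
    have cardE: "card E = 2*d - l" unfolding E_def using zs l1 l2 m_def
      by (simp add: distinct_card)
    have EW: "E \<subseteq> W" unfolding E_def W_def by (rule set_take_subset)
    have EZ: "E \<subseteq> Z" using EW set_drop_subset[of r zs] zs(3) unfolding W_def by blast
    have finE: "finite E" unfolding E_def by simp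
    define Y where "Y = U \<union> E"
    have UE: "\<forall>u\<in>U. \<forall>e\<in>E. u < e" using XW UX EW by blast
    have cardY: "card Y = 2*d" unfolding Y_def using UE finU finE cardE l_def l2
      by (subst card_Un_disjoint) auto
    have YZ: "Y \<in> binom_eq Z (2*d)" using cardY UX XZ EZ finU finE
      by (auto simp: binom_eq_def Y_def)
    have sortY: "sorted_list_of_set Y = sorted_list_of_set U @ sorted_list_of_set E"
      unfolding Y_def using finU finE UE by (rule sorted_list_Un)
    have lenU: "length (sorted_list_of_set U) = l" using l_def by simp
    have phiY: "\<forall>i\<in>{1..l}. phi Y i = phi U i"
      unfolding phi_def sortY using lenU by (auto simp: nth_append)
    have setU: "set (sorted_list_of_set U) = U" using finU by simp
    have phiU_img: "phi U ` {1..l} = U"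
    proof
      show "phi U ` {1..l} \<subseteq> U"
      proof
        fix x assume "x \<in> phi U ` {1..l}"
        then obtain i where i: "i \<in> {1..l}" "x = phi U i" by blast
        then have "i - 1 < length (sorted_list_of_set U)" using lenU by auto
        then have "x \<in> set (sorted_list_of_set U)" using i unfolding phi_def by simp
        then show "x \<in> U" using setU by simp
      qed
    next
      show "U \<subseteq> phi U ` {1..l}"
      proof
        fix u assume "u \<in> U"
        then obtain j where j: "j < l" "sorted_list_of_set U ! j = u"
          using setU lenU by (metis in_set_conv_nth)
        then have "phi U (Suc j) = u" unfolding phi_def by simp
        moreover have "Suc j \<in> {1..l}" using j by simp
        ultimately show "u \<in> phi U ` {1..l}" by blast
      qed
    qed
    have phiU_inj: "inj_on (phi U) {1..l}"
      unfolding phi_def inj_on_def using lenU finU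
      by (auto simp: nth_eq_iff_index_eq)
    have tauF: "tau F = {S. S \<subseteq> {1..l} \<and> phi U ` S \<in> F}"
      unfolding tau_def phi_def U_def l_def by simp
    have tauA: "tau F \<in> A"
    proof -
      have "S \<in> B" if "S \<subseteq> {1..l}" "phi U ` S \<in> F" for S
      proof -
        have "card S = card (phi U ` S)" using phiU_inj that(1)
          by (metis card_image inj_on_subset)
        moreover have "finite S" using that(1) finite_subset by blast
        ultimately show ?thesis using that FX l2 unfolding B_def binom_le_def by force
      qed
      then show ?thesis unfolding tauF A_def by auto
    qed
    have embF: "emb Y (tau F) = F"
    proof
      show "emb Y (tau F) \<subseteq> F" unfolding emb_def tauF using phiY
        by (auto simp: subset_iff)
    next
      show "F \<subseteq> emb Y (tau F)"
      proof
        fix E' assume E': "E' \<in> F"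
        define S where "S = {i \<in> {1..l}. phi U i \<in> E'}"
        have "E' \<subseteq> U" using E' U_def by auto
        have "phi U ` S = E'"
        proof
          show "phi U ` S \<subseteq> E'" unfolding S_def by auto
        next
          show "E' \<subseteq> phi U ` S"
          proof
            fix x assume "x \<in> E'"
            then have "x \<in> phi U ` {1..l}" using \<open>E' \<subseteq> U\<close> phiU_img by blast
            then obtain i where "i \<in> {1..l}" "x = phi U i" by blast
            then show "x \<in> phi U ` S" unfolding S_def using \<open>x \<in> E'\<close> by blast
          qed
        qed
        moreover have "phi Y ` S = phi U ` S" using phiY S_def by auto
        ultimately show "E' \<in> emb Y (tau F)" unfolding emb_def tauF
          using E' S_def by (auto intro!: image_eqI[where x=S])
      qed
    qed
    have "F \<in> binom_le (binom_le {1..n} 2) d"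
      using F Xn by (auto simp: binom_le_def)
    then have "lam F < 2^k" using assms(6) by blast
    then have "lam F = g Y (tau F)" unfolding g_def using tauA embF by simp
    then show ?thesis using YZ by blast
  qed
  have "canonical d lam X"
    unfolding canonical_def
  proof (intro conjI ballI impI)
    show "X \<noteq> {}" using cardX assms(3) by auto
  next
    fix F1 F2 assume F1: "F1 \<in> binom_le (binom_le X 2) d"
      and F2: "F2 \<in> binom_le (binom_le X 2) d" and t: "tau F1 = tau F2"
    obtain Y1 where Y1: "Y1 \<in> binom_eq Z (2*d)" "lam F1 = g Y1 (tau F1)" using key[OF F1] by blast
    obtain Y2 where Y2: "Y2 \<in> binom_eq Z (2*d)" "lam F2 = g Y2 (tau F2)" using key[OF F2] by blast
    show "lam F1 = lam F2" using gsame[OF Y1(1) Y2(1)] Y1(2) Y2(2) t by simp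
  qed
  then show ?thesis using Xn cardX by blast
qed

end
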